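(* Let $(\lambda_n)_{n\ge0}$ be an increasing sequence of non-negative real numbers tending to infinity and let $(c_n)_{n\ge0}$ be complex numbers. Then $$\sum_{\lambda_n\le x}\lambda_n|c_n|=O(x)\quad(x\to\infty)$$ holds if and only if $$\sum_{x\le\lambda_n}\frac{|c_n|}{\lambda_n}=O\!\left(\frac1x\right)\quad(x\to\infty).$$ *)

theory Defs
  imports "HOL-Analysis.Analysis" "HOL-Library.Landau_Symbols"
begin

end

theory Submission
  imports Defs
begin


lemma dyadic_ex:
  fixes a t :: real
  assumes "a > 0" "a \<le> t" "t < a * 2^m"
  shows "\<exists>k<m. a * 2^k \<le> t \<and> t < a * 2^(Suc k)"
  using assms(2,3)
proof (induction m)
  case 0 then show ?case by simp
next
  case (Suc m)
  show ?case
  proof (cases "t < a * 2^m")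
    case True
    with Suc.IH Suc.prems obtain k where "k<m" "a * 2^k \<le> t \<and> t < a * 2^(Suc k)" by blast
    then show ?thesis by (intro exI[of _ k]) auto
  next
    case False
    then show ?thesis using Suc.prems by (intro exI[of _ m]) auto
  qed
qed

lemma geo_le: "(\<Sum>k<K. (1/2::real)^k) \<le> 2"
proof -
  have "(\<Sum>k<K. (1/2::real)^k) = 2 - 2 * (1/2)^K"
    by (induction K) (auto simp: field_simps)
  then show ?thesis by simp
qed

lemma fin_le:
  fixes lam :: "nat \<Rightarrow> real"
  assumes "filterlim lam at_top sequentially"
  shows "finite {n. lam n \<le> x}"
proof -
  have "eventually (\<lambda>n. x + 1 \<le> lam n) sequentially"
    using assms by (simp add: filterlim_at_top)
  then obtain N where N: "\<And>n. n \<ge> N \<Longrightarrow> x + 1 \<le> lam n"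
    by (auto simp: eventually_sequentially)
  have "{n. lam n \<le> x} \<subseteq> {..<N}"
  proof
    fix n assume "n \<in> {n. lam n \<le> x}"
    then have "lam n \<le> x" by simp
    then have "\<not> n \<ge> N" using N[of n] by linarith
    then show "n \<in> {..<N}" by simp
  qed
  then show ?thesis by (rule finite_subset) simp
qed

lemma fwd_bound:
  fixes lam a :: "nat \<Rightarrow> real"
  assumes x: "x > 0" and C: "C \<ge> 0"
    and a: "\<And>n. a n \<ge> 0" and lam0: "\<And>n. lam n \<ge> 0"
    and fin: "\<And>y. finite {n. lam n \<le> y}"
    and S: "\<And>y. y \<ge> x \<Longrightarrow> (\<Sum>n\<in>{n. lam n \<le> y}. lam n * a n) \<le> C * y"
    and F: "finite F" "\<And>n. n \<in> F \<Longrightarrow> x \<le> lam n"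
  shows "(\<Sum>n\<in>F. a n / lam n) \<le> 4 * C / x"
proof -
  obtain K where K: "(\<Sum>n\<in>F. lam n) / x < 2^K"
    using real_arch_pow[of 2 "(\<Sum>n\<in>F. lam n) / x"] by auto
  have bnd: "lam n < x * 2^K" if "n \<in> F" for n
  proof -
    have "lam n \<le> (\<Sum>n\<in>F. lam n)" using F(1) that lam0 by (intro member_le_sum) auto
    also have "\<dots> < x * 2^K" using K x by (simp add: field_simps)
    finally show ?thesis .
  qed
  define g where "g k n = (if lam n \<le> x * 2^(Suc k) then lam n * a n / (x*2^k)^2 else 0)" for k n
  have g0: "g k n \<ge> 0" for k n unfolding g_def using a lam0 by auto
  have pt: "a n / lam n \<le> (\<Sum>k<K. g k n)" if n: "n \<in> F" for n
  proof -
    obtain k where k: "k < K" "x * 2^k \<le> lam n" "lam n < x * 2^(Suc k)"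
      using dyadic_ex[OF x F(2)[OF n] bnd[OF n]] by blast
    have q: "0 < x * 2^k" using x by simp
    have "a n / lam n = lam n * a n / (lam n)^2"
      using q k by (simp add: power2_eq_square)
    also have "\<dots> \<le> lam n * a n / (x*2^k)^2"
      using q k a[of n] lam0[of n] x
      by (intro divide_left_mono mult_nonneg_nonneg power_mono mult_pos_pos) auto
    also have "\<dots> = g k n" using k unfolding g_def by simp
    also have "\<dots> \<le> (\<Sum>k<K. g k n)" using k g0 by (intro member_le_sum) auto
    finally show ?thesis .
  qed
  have kb: "(\<Sum>n\<in>F. g k n) \<le> 2 * C / x * (1/2)^k" for k
  proof -
    define y where "y = x * 2^(Suc k)"
    have "(\<Sum>n\<in>F. g k n) = (\<Sum>n\<in>{n\<in>F. lam n \<le> y}. lam n * a n) / (x*2^k)^2"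
    proof -
      have "(\<Sum>n\<in>F. g k n) = (\<Sum>n\<in>F. (if lam n \<le> y then lam n * a n else 0) / (x*2^k)^2)"
        unfolding g_def y_def by (intro sum.cong) auto
      also have "\<dots> = (\<Sum>n\<in>F. (if lam n \<le> y then lam n * a n else 0)) / (x*2^k)^2"
        by (simp add: sum_divide_distrib)
      finally show ?thesis using F(1) by (simp add: sum.inter_filter)
    qed
    also have "\<dots> \<le> (\<Sum>n\<in>{n. lam n \<le> y}. lam n * a n) / (x*2^k)^2"
      using fin[of y] a lam0 by (intro divide_right_mono sum_mono2) auto
    also have "\<dots> \<le> C * y / (x*2^k)^2"
    proof -
      have "(1::real) \<le> 2^(Suc k)" by (rule one_le_power) simp
      then have "x * 1 \<le> y" unfolding y_def using x by (intro mult_left_mono) auto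
      then show ?thesis using S[of y] by (intro divide_right_mono) auto
    qed
    also have "\<dots> = 2 * C / x * (1/2)^k"
      unfolding y_def using x by (simp add: field_simps power2_eq_square power_mult_distrib)
    finally show ?thesis .
  qed
  have "(\<Sum>n\<in>F. a n / lam n) \<le> (\<Sum>n\<in>F. \<Sum>k<K. g k n)"
    by (intro sum_mono pt)
  also have "\<dots> = (\<Sum>k<K. \<Sum>n\<in>F. g k n)" by (rule sum.swap)
  also have "\<dots> \<le> (\<Sum>k<K. 2 * C / x * (1/2)^k)" by (intro sum_mono kb)
  also have "\<dots> = 2 * C / x * (\<Sum>k<K. (1/2)^k)" by (simp add: sum_distrib_left)
  also have "\<dots> \<le> 2 * C / x * 2" using C x geo_le by (intro mult_left_mono) auto
  finally show ?thesis by simp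
qed

lemma bwd_bound:
  fixes lam a :: "nat \<Rightarrow> real"
  assumes x0: "x0 > 0" and C: "C \<ge> 0"
    and a: "\<And>n. a n \<ge> 0" and lam0: "\<And>n. lam n \<ge> 0"
    and fin: "\<And>y. finite {n. lam n \<le> y}"
    and T: "\<And>y. y \<ge> x0 \<Longrightarrow> (\<lambda>n. a n / lam n) summable_on {n. y \<le> lam n} \<and>
              (\<Sum>\<^sub>\<infinity>n\<in>{n. y \<le> lam n}. a n / lam n) \<le> C / y"
    and x: "x \<ge> 2 * x0"
  shows "(\<Sum>n\<in>{n. 2 * x0 \<le> lam n \<and> lam n \<le> x}. lam n * a n) \<le> 4 * C * x"
proof -
  define G where "G = {n. 2 * x0 \<le> lam n \<and> lam n \<le> x}"
  have finG: "finite G" unfolding G_def by (rule finite_subset[OF _ fin[of x]]) auto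
  have xpos: "x > 0" using x x0 by simp
  obtain K where K: "x / x0 < 2^K"
    using real_arch_pow[of 2 "x / x0"] by auto
  define g where "g k n = (if x0 \<le> x / 2^(Suc k) \<and> x / 2^(Suc k) \<le> lam n
                      then (x/2^k)^2 * (a n / lam n) else 0)" for k n
  have g0: "g k n \<ge> 0" for k n unfolding g_def using a lam0 by auto
  have pt: "lam n * a n \<le> (\<Sum>k<K. g k n)" if n: "n \<in> G" for n
  proof -
    have ln: "2 * x0 \<le> lam n" "lam n \<le> x" using n unfolding G_def by auto
    have lpos: "lam n > 0" using ln x0 by simp
    have t1: "1 \<le> x / lam n" using ln lpos by simp
    have "x / lam n \<le> x / (2 * x0)" using ln xpos x0 by (intro divide_left_mono) auto
    also have "\<dots> \<le> x / x0" using xpos x0 by (intro divide_left_mono) auto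
    finally have t2: "x / lam n < 1 * 2^K" using K by simp
    obtain k where k: "k < K" "1 * 2^k \<le> x / lam n" "x / lam n < 1 * 2^(Suc k)"
      using dyadic_ex[OF _ t1 t2] by auto
    have u1: "lam n \<le> x / 2^k" using k(2) lpos by (simp add: field_simps)
    have u2: "x / 2^(Suc k) \<le> lam n" using k(3) lpos by (simp add: field_simps)
    have "x0 * 2 * 2^k \<le> lam n * 2^k" using ln by (intro mult_right_mono) auto
    also have "\<dots> \<le> x" using u1 by (simp add: field_simps)
    finally have u3: "x0 \<le> x / 2^(Suc k)" by (simp add: field_simps)
    have "lam n * a n = (lam n)^2 * (a n / lam n)" using lpos by (simp add: power2_eq_square)
    also have "\<dots> \<le> (x/2^k)^2 * (a n / lam n)"
      using u1 lpos a[of n] by (intro mult_right_mono power_mono) auto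
    also have "\<dots> = g k n" unfolding g_def using u2 u3 by simp
    also have "\<dots> \<le> (\<Sum>k<K. g k n)" using k g0 by (intro member_le_sum) auto
    finally show ?thesis .
  qed
  have kb: "(\<Sum>n\<in>G. g k n) \<le> 2 * C * x * (1/2)^k" for k
  proof (cases "x0 \<le> x / 2^(Suc k)")
    case False
    then have "(\<Sum>n\<in>G. g k n) = 0" unfolding g_def by simp
    then show ?thesis using C xpos by simp
  next
    case True
    define y where "y = x / 2^(Suc k)"
    have ypos: "y > 0" using xpos unfolding y_def by simp
    have "(\<Sum>n\<in>G. g k n) = (\<Sum>n\<in>G. (x/2^k)^2 * (if y \<le> lam n then a n / lam n else 0))"
      unfolding g_def y_def using True by (intro sum.cong) auto
    also have "\<dots> = (x/2^k)^2 * (\<Sum>n\<in>G. (if y \<le> lam n then a n / lam n else 0))"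
      by (simp add: sum_distrib_left)
    also have "\<dots> = (x/2^k)^2 * (\<Sum>n\<in>{n\<in>G. y \<le> lam n}. a n / lam n)"
      using finG by (simp add: sum.inter_filter)
    also have "\<dots> \<le> (x/2^k)^2 * (\<Sum>\<^sub>\<infinity>n\<in>{n. y \<le> lam n}. a n / lam n)"
      using T[of y] True finG a lam0 unfolding y_def
      by (intro mult_left_mono finite_sum_le_infsum) auto
    also have "\<dots> \<le> (x/2^k)^2 * (C / y)"
      using T[of y] True unfolding y_def by (intro mult_left_mono) auto
    also have "\<dots> = 2 * C * x * (1/2)^k"
      unfolding y_def using xpos by (simp add: field_simps power2_eq_square power_mult_distrib)
    finally show ?thesis .
  qed
  have "(\<Sum>n\<in>G. lam n * a n) \<le> (\<Sum>n\<in>G. \<Sum>k<K. g k n)"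
    by (intro sum_mono pt)
  also have "\<dots> = (\<Sum>k<K. \<Sum>n\<in>G. g k n)" by (rule sum.swap)
  also have "\<dots> \<le> (\<Sum>k<K. 2 * C * x * (1/2)^k)" by (intro sum_mono kb)
  also have "\<dots> = 2 * C * x * (\<Sum>k<K. (1/2)^k)" by (simp add: sum_distrib_left)
  also have "\<dots> \<le> 2 * C * x * 2" using C xpos geo_le by (intro mult_left_mono) auto
  finally show ?thesis unfolding G_def by simp
qed

theorem lemma2p2:
  fixes lam :: "nat \<Rightarrow> real" and c :: "nat \<Rightarrow> complex"
  assumes "strict_mono lam"
    and "\<And>n. lam n \<ge> 0"
    and "filterlim lam at_top sequentially"
  shows "(\<lambda>x::real. \<Sum>n\<in>{n. lam n \<le> x}. lam n * norm (c n)) \<in> O(\<lambda>x. x)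
     \<longleftrightarrow>
     ((\<forall>\<^sub>F x in at_top. (\<lambda>n. norm (c n) / lam n) summable_on {n. x \<le> lam n}) \<and>
      (\<lambda>x::real. \<Sum>\<^sub>\<infinity>n\<in>{n. x \<le> lam n}. norm (c n) / lam n) \<in> O(\<lambda>x. 1 / x))"
proof -
  define a where "a n = norm (c n)" for n
  have a0: "a n \<ge> 0" for n unfolding a_def by simp
  have lam0: "lam n \<ge> 0" for n by (rule assms(2))
  have fin: "finite {n. lam n \<le> y}" for y by (rule fin_le[OF assms(3)])
  define S where "S y = (\<Sum>n\<in>{n. lam n \<le> y}. lam n * a n)" for y
  define T where "T y = (\<Sum>\<^sub>\<infinity>n\<in>{n. y \<le> lam n}. a n / lam n)" for y
  have S0: "S y \<ge> 0" for y unfolding S_def using a0 lam0 by (intro sum_nonneg) auto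
  have T0: "T y \<ge> 0" for y unfolding T_def using a0 lam0 by (intro infsum_nonneg) auto
  have "S \<in> O(\<lambda>x. x) \<longleftrightarrow>
     ((\<forall>\<^sub>F x in at_top. (\<lambda>n. a n / lam n) summable_on {n. x \<le> lam n}) \<and> T \<in> O(\<lambda>x. 1 / x))"
  proof
    assume "S \<in> O(\<lambda>x. x)"
    then obtain C where C: "C > 0" "eventually (\<lambda>x. norm (S x) \<le> C * norm x) at_top"
      by (rule landau_o.bigE)
    then obtain x1 where x1: "\<And>x. x \<ge> x1 \<Longrightarrow> norm (S x) \<le> C * norm x"
      by (auto simp: eventually_at_top_linorder)
    define x2 where "x2 = max x1 1"
    have Sb: "S y \<le> C * y" if "y \<ge> x2" for y
      using x1[of y] that S0[of y] unfolding x2_def by auto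
    have main: "(\<lambda>n. a n / lam n) summable_on {n. x \<le> lam n} \<and> T x \<le> 4 * C / x"
      if x: "x \<ge> x2" for x
    proof -
      have xpos: "x > 0" using x unfolding x2_def by simp
      have fb: "(\<Sum>n\<in>F. a n / lam n) \<le> 4 * C / x" if "finite F" "F \<subseteq> {n. x \<le> lam n}" for F
        using fwd_bound[of x C a lam F] xpos C a0 lam0 fin Sb x that unfolding S_def by fastforce
      have sm: "(\<lambda>n. a n / lam n) summable_on {n. x \<le> lam n}"
        using a0 lam0 fb by (intro nonneg_bdd_above_summable_on bdd_aboveI[of _ "4 * C / x"]) auto
      moreover have "T x \<le> 4 * C / x"
        unfolding T_def using sm fb by (intro infsum_le_finite_sums) auto
      ultimately show ?thesis by simp
    qed
    show "(\<forall>\<^sub>F x in at_top. (\<lambda>n. a n / lam n) summable_on {n. x \<le> lam n}) \<and> T \<in> O(\<lambda>x. 1 / x)"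
    proof
      show "\<forall>\<^sub>F x in at_top. (\<lambda>n. a n / lam n) summable_on {n. x \<le> lam n}"
        using main by (auto simp: eventually_at_top_linorder)
      show "T \<in> O(\<lambda>x. 1 / x)"
      proof (rule bigoI[of _ "4 * C"])
        show "\<forall>\<^sub>F x in at_top. norm (T x) \<le> 4 * C * norm (1 / x)"
          unfolding eventually_at_top_linorder
        proof (intro exI[of _ x2] allI impI)
          fix x assume x: "x \<ge> x2"
          have xpos: "x > 0" using x unfolding x2_def by simp
          show "norm (T x) \<le> 4 * C * norm (1 / x)"
            using main[OF x] T0[of x] xpos by simp
        qed
      qed
    qed
  next
    assume H: "(\<forall>\<^sub>F x in at_top. (\<lambda>n. a n / lam n) summable_on {n. x \<le> lam n}) \<and> T \<in> O(\<lambda>x. 1 / x)"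
    then obtain x2 where x2: "\<And>x. x \<ge> x2 \<Longrightarrow> (\<lambda>n. a n / lam n) summable_on {n. x \<le> lam n}"
      by (auto simp: eventually_at_top_linorder)
    from H obtain C where C: "C > 0" "eventually (\<lambda>x. norm (T x) \<le> C * norm (1 / x)) at_top"
      by (auto elim: landau_o.bigE)
    then obtain x3 where x3: "\<And>x. x \<ge> x3 \<Longrightarrow> norm (T x) \<le> C * norm (1 / x)"
      by (auto simp: eventually_at_top_linorder)
    define x0 where "x0 = max (max x2 x3) 1"
    have x0pos: "x0 > 0" unfolding x0_def by simp
    have Tb: "(\<lambda>n. a n / lam n) summable_on {n. y \<le> lam n} \<and>
              (\<Sum>\<^sub>\<infinity>n\<in>{n. y \<le> lam n}. a n / lam n) \<le> C / y" if "y \<ge> x0" for y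
    proof -
      have ypos: "y > 0" using that unfolding x0_def by simp
      have "T y \<le> C / y" using x3[of y] that T0[of y] ypos unfolding x0_def by auto
      then show ?thesis using x2[of y] that unfolding x0_def T_def by auto
    qed
    define D where "D = S (2 * x0)"
    have Sb: "S x \<le> (D + 4 * C) * x" if x: "x \<ge> 2 * x0" for x
    proof -
      have x1: "x \<ge> 1" using x unfolding x0_def by simp
      have split: "{n. lam n \<le> x} = {n. lam n \<le> x \<and> lam n < 2 * x0} \<union> {n. 2 * x0 \<le> lam n \<and> lam n \<le> x}"
        by auto
      have "S x = (\<Sum>n\<in>{n. lam n \<le> x \<and> lam n < 2 * x0}. lam n * a n)
                 + (\<Sum>n\<in>{n. 2 * x0 \<le> lam n \<and> lam n \<le> x}. lam n * a n)"
        unfolding S_def split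
        by (rule sum.union_disjoint) (auto intro: finite_subset[OF _ fin[of x]])
      also have "(\<Sum>n\<in>{n. lam n \<le> x \<and> lam n < 2 * x0}. lam n * a n) \<le> D"
        unfolding D_def S_def using fin[of "2 * x0"] a0 lam0 by (intro sum_mono2) auto
      also have "(\<Sum>n\<in>{n. 2 * x0 \<le> lam n \<and> lam n \<le> x}. lam n * a n) \<le> 4 * C * x"
        by (rule bwd_bound[OF x0pos _ a0 lam0 fin Tb x]) (use C in auto)
      also have "D + 4 * C * x \<le> D * x + 4 * C * x"
        using x1 S0[of "2 * x0"] unfolding D_def by (simp add: mult_le_cancel_left1)
      finally show ?thesis by (simp add: algebra_simps)
    qed
    show "S \<in> O(\<lambda>x. x)"
    proof (rule bigoI[of _ "D + 4 * C"])
      show "\<forall>\<^sub>F x in at_top. norm (S x) \<le> (D + 4 * C) * norm x"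
        unfolding eventually_at_top_linorder
      proof (intro exI[of _ "2 * x0"] allI impI)
        fix x assume x: "x \<ge> 2 * x0"
        then have "x > 0" using x0pos by simp
        then show "norm (S x) \<le> (D + 4 * C) * norm x" using Sb[OF x] S0[of x] by simp
      qed
    qed
  qed
  then show ?thesis unfolding S_def T_def a_def .
qed

end
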